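(* Suppose $\mathcal{G}$ acts measurably on $\mathcal{X}$ and trivially on $\mathcal{Y}$. Let $\mathcal{X}_\pi$ be a measurable cross-section of $\mathcal{X}$ with projection $\pi$. Let $\mathcal{F}$ be a hypothesis class of $\mathcal{G}$-invariant functions. Let $\mathsf{T}=(X,Y,\ell)$ be any task, write $X_\pi=\pi(X)$ and define $\mathsf{T}_\pi=(X_\pi,Y,\ell)$. Assume there exists a probability measure $\nu$ on $\mathcal{G}$ such that $X\overset{d}{=}GX_\pi$ with $G\sim\nu$ independent of $X_\pi$. Then $\mathsf{T}$ and $\mathsf{T}_\pi$ are $(\mathcal{F},\mathcal{G})$-equivalent.
   Context: $\mathcal{G}$ is a compact, second countable, Hausdorff topological group; $\mathcal{X}$ is a nonempty Polish space and $\mathcal{Y}$ a standard Borel space, both with Borel $\sigma$-algebras; $\mathcal{Z}=\mathcal{X}\times\mathcal{Y}$ with action $g(x,y)=(gx,gy)$. A task is a tuple $(X,Y,\ell)$ with $X,Y$ random elements of $\mathcal{X},\mathcal{Y}$ and $\ell:\mathcal{Y}\times\mathcal{Y}\to\mathbb{R}_+$ integrable; it is assumed that $\mathbb{E}[\ell(f(X),Y)]<\infty$ for all $f\in\mathcal{F}$. A hypothesis class $\mathcal{F}$ is a set of measurable functions $\mathcal{X}\to\mathcal{Y}$; a learning algorithm is a map $\mathtt{alg}:\bigcup_{i\in\mathbb{N}}\mathcal{Z}^i\to\mathcal{F}$. $\mathtt{alg}$ learns $\mathcal{F}$ with respect to $(X,Y,\ell)$ if there is $m:(0,1)^2\to\mathbb{N}$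 such that for all $\epsilon,\delta\in(0,1)$ and $n\ge m(\epsilon,\delta)$, $\mathbb{P}\big(\mathbb{E}[\ell(f_S(X),Y)\mid S]\le\inf_{f\in\mathcal{F}}\mathbb{E}[\ell(f(X),Y)]+\epsilon\big)\ge1-\delta$, where $S$ is a tuple of $n$ i.i.d. copies of $(X,Y)$ independent of $(X,Y)$ and $f_S=\mathtt{alg}(S)$; its sample complexity $m_{\mathtt{alg},\mathsf{T}}$ is the pointwise minimum of all such $m$. $\mathtt{alg}$ is $\mathcal{G}$-invariant if $\mathtt{alg}((g_1x_1,g_1y_1),\dots,(g_nx_n,g_ny_n))=\mathtt{alg}((x_1,y_1),\dots,(x_n,y_n))$ for all $n$, $(x_i,y_i)\in\mathcal{Z}$, $g_i\in\mathcal{G}$. Tasks $\mathsf{T},\mathsf{T}'$ are $(\mathcal{F},\mathcal{G})$-equivalent if for every $\mathcal{G}$-invariant learning algorithm $\mathtt{alg}$: $\mathtt{alg}$ learns $\mathcal{F}$ w.r.t. $\mathsf{T}$ iff it does w.r.t. $\mathsf{T}'$, and $m_{\mathtt{alg},\mathsf{T}}=m_{\mathtt{alg},\mathsf{T}'}$. A measurable cross-section is a measurable $\mathcal{X}_\pi\subseteq\mathcal{X}$ containing exactly one point of each $\mathcal{G}$-orbit, such that the map $\pi:\mathcal{X}\to\mathcal{X}_\pi$ sending $x$ to the element of $\mathcal{X}_\pi$ in its orbit is measurable (trace $\sigma$-algebra on $\mathcal{X}_\pi$). $f$ is $\mathcal{G}$-invariant if $f(gx)=f(x)$ for all $g,x$.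 *)

theory Defs
  imports "HOL-Probability.Probability"
begin

definition standard_borel_space :: "'y measure \<Rightarrow> bool" where
  "standard_borel_space MY \<longleftrightarrow>
     (\<exists>T :: 'y topology. completely_metrizable_space T \<and> separable_space T \<and>
        topspace T = space MY \<and> sets MY = sigma_sets (topspace T) {U. openin T U})"

definition compact_topological_group ::
    "('g::{t2_space,second_countable_topology} \<Rightarrow> 'g \<Rightarrow> 'g) \<Rightarrow> 'g \<Rightarrow> ('g \<Rightarrow> 'g) \<Rightarrow> bool" where
  "compact_topological_group mul e ginv \<longleftrightarrow>
     (\<forall>a b c. mul (mul a b) c = mul a (mul b c)) \<and>
     (\<forall>a. mul e a = a \<and> mul a e = a) \<and>
     (\<forall>a. mul (ginv a) a = e \<and> mul a (ginv a) = e) \<and>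
     continuous_on UNIV (\<lambda>p. mul (fst p) (snd p)) \<and>
     continuous_on UNIV ginv \<and>
     compact (UNIV :: 'g set)"

definition measurable_action ::
    "('g::topological_space \<Rightarrow> 'g \<Rightarrow> 'g) \<Rightarrow> 'g \<Rightarrow> ('g \<Rightarrow> 'x::topological_space \<Rightarrow> 'x) \<Rightarrow> bool" where
  "measurable_action mul e act \<longleftrightarrow>
     (\<forall>x. act e x = x) \<and> (\<forall>g h x. act (mul g h) x = act g (act h x)) \<and>
     (\<lambda>p. act (fst p) (snd p)) \<in> measurable (borel \<Otimes>\<^sub>M borel) borel"

definition orbit :: "('g \<Rightarrow> 'x \<Rightarrow> 'x) \<Rightarrow> 'x \<Rightarrow> 'x set" where
  "orbit act x = {act g x | g. True}"

definition measurable_cross_section ::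
    "('g \<Rightarrow> 'x::topological_space \<Rightarrow> 'x) \<Rightarrow> 'x set \<Rightarrow> ('x \<Rightarrow> 'x) \<Rightarrow> bool" where
  "measurable_cross_section act Xpi proj \<longleftrightarrow>
     Xpi \<in> sets borel \<and>
     (\<forall>x. \<exists>!p. p \<in> Xpi \<and> p \<in> orbit act x) \<and>
     (\<forall>x. proj x \<in> Xpi \<and> proj x \<in> orbit act x) \<and>
     proj \<in> measurable borel (restrict_space borel Xpi)"

definition invariant_fun :: "('g \<Rightarrow> 'x \<Rightarrow> 'x) \<Rightarrow> ('x \<Rightarrow> 'y) \<Rightarrow> bool" where
  "invariant_fun act f \<longleftrightarrow> (\<forall>g x. f (act g x) = f x)"

definition hypothesis_class :: "'y measure \<Rightarrow> ('x::topological_space \<Rightarrow> 'y) set \<Rightarrow> bool" where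
  "hypothesis_class MY F \<longleftrightarrow> F \<subseteq> measurable borel MY"

definition is_task ::
    "'y measure \<Rightarrow> ('x::topological_space \<Rightarrow> 'y) set \<Rightarrow> 'w measure \<Rightarrow> ('w \<Rightarrow> 'x) \<Rightarrow> ('w \<Rightarrow> 'y)
     \<Rightarrow> ('y \<Rightarrow> 'y \<Rightarrow> real) \<Rightarrow> bool" where
  "is_task MY F M X Y loss \<longleftrightarrow>
     prob_space M \<and> X \<in> borel_measurable M \<and> Y \<in> measurable M MY \<and>
     (\<forall>a b. 0 \<le> loss a b) \<and>
     (\<lambda>p. loss (fst p) (snd p)) \<in> borel_measurable (MY \<Otimes>\<^sub>M MY) \<and>
     (\<forall>f\<in>F. (\<integral>\<^sup>+ w. ennreal (loss (f (X w)) (Y w)) \<partial>M) < \<infinity>)"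

definition data_law :: "'y measure \<Rightarrow> 'w measure \<Rightarrow> ('w \<Rightarrow> 'x::topological_space) \<Rightarrow> ('w \<Rightarrow> 'y)
     \<Rightarrow> ('x \<times> 'y) measure" where
  "data_law MY M X Y = distr M (borel \<Otimes>\<^sub>M MY) (\<lambda>w. (X w, Y w))"

text \<open>Risk E[loss(f(X),Y)]; for f = f_S with S independent of (X,Y) this is the
  conditional expectation E[loss(f_S(X),Y) | S].\<close>
definition risk :: "'y measure \<Rightarrow> 'w measure \<Rightarrow> ('w \<Rightarrow> 'x::topological_space) \<Rightarrow> ('w \<Rightarrow> 'y)
     \<Rightarrow> ('y \<Rightarrow> 'y \<Rightarrow> real) \<Rightarrow> ('x \<Rightarrow> 'y) \<Rightarrow> ennreal" where
  "risk MY M X Y loss f = (\<integral>\<^sup>+ z. ennreal (loss (f (fst z)) (snd z)) \<partial>(data_law MY M X Y))"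

definition sample_law :: "'y measure \<Rightarrow> 'w measure \<Rightarrow> ('w \<Rightarrow> 'x::topological_space) \<Rightarrow> ('w \<Rightarrow> 'y)
     \<Rightarrow> nat \<Rightarrow> (nat \<Rightarrow> 'x \<times> 'y) measure" where
  "sample_law MY M X Y n = PiM {..<n} (\<lambda>_. data_law MY M X Y)"

definition learning_algorithm :: "('x \<Rightarrow> 'y) set \<Rightarrow> (('x \<times> 'y) list \<Rightarrow> ('x \<Rightarrow> 'y)) \<Rightarrow> bool" where
  "learning_algorithm F alg \<longleftrightarrow> (\<forall>zs. alg zs \<in> F)"

definition invariant_algorithm ::
    "('g \<Rightarrow> 'x \<Rightarrow> 'x) \<Rightarrow> (('x \<times> 'y) list \<Rightarrow> ('x \<Rightarrow> 'y)) \<Rightarrow> bool" where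
  "invariant_algorithm act alg \<longleftrightarrow>
     (\<forall>zs gs. length gs = length zs \<longrightarrow>
        alg (map2 (\<lambda>g z. (act g (fst z), snd z)) gs zs) = alg zs)"

definition learns_with ::
    "'y measure \<Rightarrow> ('x::topological_space \<Rightarrow> 'y) set \<Rightarrow> (('x \<times> 'y) list \<Rightarrow> ('x \<Rightarrow> 'y))
     \<Rightarrow> 'w measure \<Rightarrow> ('w \<Rightarrow> 'x) \<Rightarrow> ('w \<Rightarrow> 'y) \<Rightarrow> ('y \<Rightarrow> 'y \<Rightarrow> real)
     \<Rightarrow> (real \<Rightarrow> real \<Rightarrow> nat) \<Rightarrow> bool" where
  "learns_with MY F alg M X Y loss m \<longleftrightarrow>
     (\<forall>\<epsilon> \<delta>. 0 < \<epsilon> \<and> \<epsilon> < 1 \<and> 0 < \<delta> \<and> \<delta> < 1 \<longrightarrow>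
        (\<forall>n\<ge>m \<epsilon> \<delta>.
           measure (sample_law MY M X Y n)
             {s \<in> space (sample_law MY M X Y n).
                risk MY M X Y loss (alg (map s [0..<n]))
                  \<le> (\<Sqinter>f\<in>F. risk MY M X Y loss f) + ennreal \<epsilon>}
           \<ge> 1 - \<delta>))"

definition learns ::
    "'y measure \<Rightarrow> ('x::topological_space \<Rightarrow> 'y) set \<Rightarrow> (('x \<times> 'y) list \<Rightarrow> ('x \<Rightarrow> 'y))
     \<Rightarrow> 'w measure \<Rightarrow> ('w \<Rightarrow> 'x) \<Rightarrow> ('w \<Rightarrow> 'y) \<Rightarrow> ('y \<Rightarrow> 'y \<Rightarrow> real) \<Rightarrow> bool" where
  "learns MY F alg M X Y loss \<longleftrightarrow> (\<exists>m. learns_with MY F alg M X Y loss m)"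

definition sample_complexity ::
    "'y measure \<Rightarrow> ('x::topological_space \<Rightarrow> 'y) set \<Rightarrow> (('x \<times> 'y) list \<Rightarrow> ('x \<Rightarrow> 'y))
     \<Rightarrow> 'w measure \<Rightarrow> ('w \<Rightarrow> 'x) \<Rightarrow> ('w \<Rightarrow> 'y) \<Rightarrow> ('y \<Rightarrow> 'y \<Rightarrow> real) \<Rightarrow> real \<Rightarrow> real \<Rightarrow> nat" where
  "sample_complexity MY F alg M X Y loss \<epsilon> \<delta> =
     (LEAST k. \<exists>m. learns_with MY F alg M X Y loss m \<and> m \<epsilon> \<delta> = k)"

definition FG_equivalent ::
    "'y measure \<Rightarrow> ('x::topological_space \<Rightarrow> 'y) set \<Rightarrow> ('g \<Rightarrow> 'x \<Rightarrow> 'x)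
     \<Rightarrow> 'w measure \<Rightarrow> ('w \<Rightarrow> 'x) \<Rightarrow> ('w \<Rightarrow> 'y) \<Rightarrow> ('y \<Rightarrow> 'y \<Rightarrow> real)
     \<Rightarrow> 'v measure \<Rightarrow> ('v \<Rightarrow> 'x) \<Rightarrow> ('v \<Rightarrow> 'y) \<Rightarrow> ('y \<Rightarrow> 'y \<Rightarrow> real) \<Rightarrow> bool" where
  "FG_equivalent MY F act M X Y loss M' X' Y' loss' \<longleftrightarrow>
     (\<forall>alg. learning_algorithm F alg \<and> invariant_algorithm act alg \<longrightarrow>
        (learns MY F alg M X Y loss \<longleftrightarrow> learns MY F alg M' X' Y' loss') \<and>
        sample_complexity MY F alg M X Y loss = sample_complexity MY F alg M' X' Y' loss')"

end

theory Submission
  imports Defs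
begin

lemma alg_proj_inv:
  fixes act :: "'g \<Rightarrow> 'x \<Rightarrow> 'x" and alg :: "('x \<times> 'y) list \<Rightarrow> 'x \<Rightarrow> 'y"
  assumes inv: "invariant_algorithm act alg"
    and pr: "\<forall>x. proj x \<in> orbit act x"
  shows "alg (map (\<lambda>z. (proj (fst z), snd z)) zs) = alg zs"
proof -
  define gsel where "gsel = (\<lambda>z::'x \<times> 'y. SOME g. proj (fst z) = act g (fst z))"
  have H: "act (gsel z) (fst z) = proj (fst z)" for z
  proof -
    have "\<exists>g. proj (fst z) = act g (fst z)" using pr unfolding orbit_def by blast
    then have "proj (fst z) = act (gsel z) (fst z)" unfolding gsel_def by (rule someI_ex)
    then show ?thesis by simp
  qed
  have m2: "map2 (\<lambda>g z. (act g (fst z), snd z)) (map gsel ws) ws = map (\<lambda>z. (act (gsel z) (fst z), snd z)) ws" for ws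
    by (induction ws) simp_all
  have "map2 (\<lambda>g z. (act g (fst z), snd z)) (map gsel zs) zs = map (\<lambda>z. (proj (fst z), snd z)) zs"
    unfolding m2 H ..
  moreover have "alg (map2 (\<lambda>g z. (act g (fst z), snd z)) (map gsel zs) zs) = alg zs"
    using inv unfolding invariant_algorithm_def by simp
  ultimately show ?thesis by simp
qed

theorem theorem6p6:
  fixes mul :: "'g::{t2_space,second_countable_topology} \<Rightarrow> 'g \<Rightarrow> 'g"
    and e :: 'g and ginv :: "'g \<Rightarrow> 'g"
    and act :: "'g \<Rightarrow> 'x::polish_space \<Rightarrow> 'x"
    and MY :: "'y measure"
    and Xpi :: "'x set" and proj :: "'x \<Rightarrow> 'x"
    and F :: "('x \<Rightarrow> 'y) set"
    and M :: "'w measure" and X :: "'w \<Rightarrow> 'x" and Y :: "'w \<Rightarrow> 'y"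
    and loss :: "'y \<Rightarrow> 'y \<Rightarrow> real"
  assumes "compact_topological_group mul e ginv"
    and "standard_borel_space MY" and "space MY = UNIV"
    and "measurable_action mul e act"
    and "measurable_cross_section act Xpi proj"
    and "hypothesis_class MY F"
    and "\<forall>f\<in>F. invariant_fun act f"
    and "is_task MY F M X Y loss"
    and "\<exists>\<nu>. prob_space \<nu> \<and> sets \<nu> = sets (borel :: 'g measure) \<and>
           distr M borel X =
           distr (\<nu> \<Otimes>\<^sub>M distr M borel (\<lambda>w. proj (X w))) borel (\<lambda>p. act (fst p) (snd p))"
  shows "FG_equivalent MY F act M X Y loss M (\<lambda>w. proj (X w)) Y loss"
proof -
  note cs = assms(5)[unfolded measurable_cross_section_def]
  have projm[measurable]: "proj \<in> borel_measurable borel"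
    using cs measurable_restrict_space2_iff by blast
  have pr: "\<forall>x. proj x \<in> orbit act x" using cs by blast
  note task = assms(8)[unfolded is_task_def]
  interpret P: prob_space M using task by blast
  have Xm[measurable]: "X \<in> borel_measurable M" using task by blast
  have Ym[measurable]: "Y \<in> measurable M MY" using task by blast
  have lossm: "(\<lambda>p. loss (fst p) (snd p)) \<in> borel_measurable (MY \<Otimes>\<^sub>M MY)"
    using task by blast
  define h :: "'x \<times> 'y \<Rightarrow> 'x \<times> 'y" where "h = (\<lambda>z. (proj (fst z), snd z))"
  have hm[measurable]: "h \<in> measurable (borel \<Otimes>\<^sub>M MY) (borel \<Otimes>\<^sub>M MY)"
    unfolding h_def by measurable
  define D where "D = data_law MY M X Y"
  define Dp where "Dp = data_law MY M (\<lambda>w. proj (X w)) Y"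
  have DpD: "Dp = distr D (borel \<Otimes>\<^sub>M MY) h"
    unfolding Dp_def D_def data_law_def
    by (subst distr_distr) (auto simp: h_def comp_def)
  have probD: "prob_space D" unfolding D_def data_law_def
    by (rule P.prob_space_distr) measurable
  have fproj: "f (proj x) = f x" if "f \<in> F" for f x
  proof -
    obtain g where "proj x = act g x" using pr unfolding orbit_def by blast
    then show ?thesis using assms(7) that unfolding invariant_fun_def by metis
  qed
  have fm: "f \<in> measurable borel MY" if "f \<in> F" for f
    using assms(6) that unfolding hypothesis_class_def by blast
  have risk_eq: "risk MY M (\<lambda>w. proj (X w)) Y loss f = risk MY M X Y loss f" if "f \<in> F" for f
  proof -
    have [measurable]: "f \<in> measurable borel MY" using fm that .
    have [measurable]: "(\<lambda>z. ennreal (loss (f (fst z)) (snd z))) \<in> borel_measurable (borel \<Otimes>\<^sub>M MY)"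
    proof -
      have "(\<lambda>z. (f (fst z), snd z)) \<in> measurable (borel \<Otimes>\<^sub>M MY) (MY \<Otimes>\<^sub>M MY)" by measurable
      from measurable_compose[OF this lossm]
      have "(\<lambda>z. loss (f (fst z)) (snd z)) \<in> borel_measurable (borel \<Otimes>\<^sub>M MY)" by simp
      then show ?thesis by measurable
    qed
    show ?thesis
      unfolding risk_def data_law_def
      by (subst (1 2) nn_integral_distr) (auto simp: fproj[OF that])
  qed
  have inf_eq: "(\<Sqinter>f\<in>F. risk MY M (\<lambda>w. proj (X w)) Y loss f) = (\<Sqinter>f\<in>F. risk MY M X Y loss f)"
    using risk_eq by (auto intro: INF_cong)
  have sD: "sets D = sets (borel \<Otimes>\<^sub>M MY)" "sets Dp = sets (borel \<Otimes>\<^sub>M MY)"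
    unfolding D_def Dp_def data_law_def by simp_all
  have hm': "h \<in> measurable D (borel \<Otimes>\<^sub>M MY)" using hm by (simp only: measurable_cong_sets[OF sD(1) refl])
  have probDp: "prob_space Dp" unfolding DpD by (rule prob_space.prob_space_distr[OF probD hm'])
  have hDp: "h \<in> measurable D Dp" using hm by (simp only: measurable_cong_sets[OF sD])
  have dDp: "distr D Dp h = Dp" unfolding DpD by (rule distr_cong) (auto simp: sD)
  have sl: "sample_law MY M (\<lambda>w. proj (X w)) Y n
      = distr (sample_law MY M X Y n) (PiM {..<n} (\<lambda>_. Dp)) (compose {..<n} h)" for n
    unfolding sample_law_def D_def[symmetric] Dp_def[symmetric]
    by (subst distr_PiM_finite_prob_space') (auto simp: probD probDp hDp dDp)
  have key: "measure (sample_law MY M (\<lambda>w. proj (X w)) Y n) {s \<in> space (sample_law MY M (\<lambda>w. proj (X w)) Y n).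
                risk MY M (\<lambda>w. proj (X w)) Y loss (alg (map s [0..<n]))
                  \<le> (\<Sqinter>f\<in>F. risk MY M (\<lambda>w. proj (X w)) Y loss f) + ennreal \<epsilon>}
           = measure (sample_law MY M X Y n) {s \<in> space (sample_law MY M X Y n).
                risk MY M X Y loss (alg (map s [0..<n]))
                  \<le> (\<Sqinter>f\<in>F. risk MY M X Y loss f) + ennreal \<epsilon>}"
    if "learning_algorithm F alg" "invariant_algorithm act alg" for alg n \<epsilon>
  proof -
    have aF: "alg zs \<in> F" for zs using that(1) unfolding learning_algorithm_def by blast
    have spc: "space (sample_law MY M (\<lambda>w. proj (X w)) Y n) = space (sample_law MY M X Y n)"
      unfolding sample_law_def data_law_def by (simp add: space_PiM)
    have sts: "sets (sample_law MY M (\<lambda>w. proj (X w)) Y n) = sets (sample_law MY M X Y n)"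
      unfolding sample_law_def data_law_def by (intro sets_PiM_cong) auto
    define E where "E = {s \<in> space (sample_law MY M X Y n).
                risk MY M X Y loss (alg (map s [0..<n]))
                  \<le> (\<Sqinter>f\<in>F. risk MY M X Y loss f) + ennreal \<epsilon>}"
    have Eeq: "{s \<in> space (sample_law MY M (\<lambda>w. proj (X w)) Y n).
                risk MY M (\<lambda>w. proj (X w)) Y loss (alg (map s [0..<n]))
                  \<le> (\<Sqinter>f\<in>F. risk MY M (\<lambda>w. proj (X w)) Y loss f) + ennreal \<epsilon>} = E"
      unfolding E_def spc inf_eq using risk_eq[OF aF] by simp
    have mapc: "map (compose {..<n} h s) [0..<n] = map h (map s [0..<n])" for s
      by (simp add: compose_def)
    have spS: "space (sample_law MY M X Y n) = PiE {..<n} (\<lambda>_. UNIV)"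
      unfolding sample_law_def data_law_def using assms(3) by (simp add: space_PiM space_pair_measure)
    have alg_eq: "alg (map (compose {..<n} h s) [0..<n]) = alg (map s [0..<n])" for s
      unfolding mapc using alg_proj_inv[OF that(2) pr, of "map s [0..<n]"] by (simp only: h_def)
    have cin: "compose {..<n} h s \<in> space (sample_law MY M X Y n)" for s
      unfolding spS by (simp add: compose_def)
    have pre: "compose {..<n} h -` E \<inter> space (sample_law MY M X Y n) = E"
    proof -
      have "compose {..<n} h -` E \<inter> space (sample_law MY M X Y n)
          = {s \<in> space (sample_law MY M X Y n). compose {..<n} h s \<in> E}" by blast
      also have "\<dots> = E" unfolding E_def using cin alg_eq by simp
      finally show ?thesis .
    qed
    show ?thesis
    proof (cases "E \<in> sets (sample_law MY M X Y n)")
      case True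
      note hDp[measurable]
      have cm: "compose {..<n} h \<in> measurable (sample_law MY M X Y n) (PiM {..<n} (\<lambda>_. Dp))"
        unfolding compose_def sample_law_def D_def[symmetric] by measurable
      have "E \<in> sets (PiM {..<n} (\<lambda>_. Dp))"
        using True unfolding sample_law_def D_def[symmetric] using sets_PiM_cong[OF refl, of "{..<n}" "\<lambda>_. D" "\<lambda>_. Dp"] sD by simp
      then have "measure (sample_law MY M (\<lambda>w. proj (X w)) Y n) E = measure (sample_law MY M X Y n) E"
        unfolding sl using pre by (simp add: measure_distr[OF cm])
      then show ?thesis unfolding Eeq E_def[symmetric] .
    next
      case False
      then show ?thesis unfolding Eeq E_def[symmetric] using sts by (simp add: measure_notin_sets)
    qed
  qed
  have lw: "learns_with MY F alg M X Y loss m \<longleftrightarrow> learns_with MY F alg M (\<lambda>w. proj (X w)) Y loss m"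
    if "learning_algorithm F alg" "invariant_algorithm act alg" for alg m
    unfolding learns_with_def using key[OF that] by simp
  show ?thesis unfolding FG_equivalent_def
  proof (intro allI impI conjI)
    fix alg assume a: "learning_algorithm F alg \<and> invariant_algorithm act alg"
    have lw': "learns_with MY F alg M X Y loss = learns_with MY F alg M (\<lambda>w. proj (X w)) Y loss"
      using lw a by blast
    show "learns MY F alg M X Y loss = learns MY F alg M (\<lambda>w. proj (X w)) Y loss"
      unfolding learns_def lw' ..
    show "sample_complexity MY F alg M X Y loss = sample_complexity MY F alg M (\<lambda>w. proj (X w)) Y loss"
      unfolding sample_complexity_def lw' ..
  qed
qed

end
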